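(* The exposure difference $ED$ satisfies boundedness, whereas none of the exposure metrics $ER$, $DTD$, $DTR$, $DID$, $DIR$ satisfies boundedness. Here a metric $m$ satisfies boundedness if there are $v_{\min},v_{\max}\in\mathbb R$ such that for every population $\mathcal D$, every candidate set $D\subseteq\mathcal D$ and every ranking $r$ of $D$, the value $m(r)$ is well-defined and $v_{\min}\le m(r)\le v_{\max}$.
   Context: A population is a finite set $\mathcal{D}$ of candidates partitioned into two nonempty groups, a non-protected group $G_0$ and a protected group $G_1$; each candidate $d$ has a relevance score $y(d)\in\mathbb R$. For a candidate set $D\subseteq\mathcal D$ with $n=|D|$, a ranking is a bijection $r:\{1,\dots,n\}\to D$ and $r^{-1}(d)$ is the position of $d$. Position bias $b(k)=1/\log_2(k+1)$. Exposure metrics: for $G\in\{G_0,G_1\}$, $\mathrm{Exposure}(G|r)=\frac{1}{|G|}\sum_{d\in G\cap D} b(r^{-1}(d))$, $Y(G)=\frac1{|G|}\sum_{d\in G}y(d)$, $CTR(G|r)=\frac1{|G|}\sum_{d\in G\cap D} b(r^{-1}(d))\,y(d)$ ($|G|$ is the group size in the whole population). $ED(r)=\mathrm{Exposure}(G_1|r)-\mathrm{Exposure}(G_0|r)$, $ER(r)=\mathrm{Exposure}(G_1|r)/\mathrm{Exposure}(G_0|r)$, $DTD(r)=\frac{\mathrm{Exposure}(G_1|r)}{Y(G_1)}-\frac{\mathrm{Exposure}(G_0|r)}{Y(G_0)}$, $DTR(r)=\frac{\mathrm{Exposure}(G_1|r)}{\mathrm{Exposure}(G_0|r)}\cdot\frac{Y(G_0)}{Y(G_1)}$,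 $DID(r)=\frac{CTR(G_1|r)}{Y(G_1)}-\frac{CTR(G_0|r)}{Y(G_0)}$, $DIR(r)=\frac{CTR(G_1|r)}{CTR(G_0|r)}\cdot\frac{Y(G_0)}{Y(G_1)}$. *)

theory Defs
  imports Complex_Main
begin

text \<open>Candidates are represented by natural numbers (any finite population is
isomorphic to one drawn from nat). A population is given by the two disjoint,
nonempty, finite groups G0 (non-protected) and G1 (protected); the population
is their union. y is the relevance score.\<close>

type_synonym metric =
  "nat set \<Rightarrow> nat set \<Rightarrow> (nat \<Rightarrow> real) \<Rightarrow> nat set \<Rightarrow> (nat \<Rightarrow> nat) \<Rightarrow> real option"

definition valid_setting ::
  "nat set \<Rightarrow> nat set \<Rightarrow> (nat \<Rightarrow> real) \<Rightarrow> nat set \<Rightarrow> (nat \<Rightarrow> nat) \<Rightarrow> bool" where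
  "valid_setting G0 G1 y D r \<longleftrightarrow>
     finite G0 \<and> finite G1 \<and> G0 \<noteq> {} \<and> G1 \<noteq> {} \<and> G0 \<inter> G1 = {} \<and>
     D \<subseteq> G0 \<union> G1 \<and> bij_betw r {1..card D} D"

definition pos_bias :: "nat \<Rightarrow> real" where
  "pos_bias k = 1 / log 2 (real k + 1)"

definition position :: "nat set \<Rightarrow> (nat \<Rightarrow> nat) \<Rightarrow> nat \<Rightarrow> nat" where
  "position D r d = inv_into {1..card D} r d"

definition exposure :: "nat set \<Rightarrow> nat set \<Rightarrow> (nat \<Rightarrow> nat) \<Rightarrow> real" where
  "exposure G D r = (1 / real (card G)) * (\<Sum>d\<in>G \<inter> D. pos_bias (position D r d))"

definition avg_rel :: "nat set \<Rightarrow> (nat \<Rightarrow> real) \<Rightarrow> real" where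
  "avg_rel G y = (1 / real (card G)) * (\<Sum>d\<in>G. y d)"

definition ctr :: "nat set \<Rightarrow> (nat \<Rightarrow> real) \<Rightarrow> nat set \<Rightarrow> (nat \<Rightarrow> nat) \<Rightarrow> real" where
  "ctr G y D r = (1 / real (card G)) * (\<Sum>d\<in>G \<inter> D. pos_bias (position D r d) * y d)"

text \<open>Metrics return None when a division by zero makes them undefined.\<close>

definition ED :: metric where
  "ED G0 G1 y D r = Some (exposure G1 D r - exposure G0 D r)"

definition ER :: metric where
  "ER G0 G1 y D r =
     (if exposure G0 D r = 0 then None else Some (exposure G1 D r / exposure G0 D r))"

definition DTD :: metric where
  "DTD G0 G1 y D r =
     (if avg_rel G1 y = 0 \<or> avg_rel G0 y = 0 then None
      else Some (exposure G1 D r / avg_rel G1 y - exposure G0 D r / avg_rel G0 y))"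

definition DTR :: metric where
  "DTR G0 G1 y D r =
     (if exposure G0 D r = 0 \<or> avg_rel G1 y = 0 then None
      else Some ((exposure G1 D r / exposure G0 D r) * (avg_rel G0 y / avg_rel G1 y)))"

definition DID :: metric where
  "DID G0 G1 y D r =
     (if avg_rel G1 y = 0 \<or> avg_rel G0 y = 0 then None
      else Some (ctr G1 y D r / avg_rel G1 y - ctr G0 y D r / avg_rel G0 y))"

definition DIR :: metric where
  "DIR G0 G1 y D r =
     (if ctr G0 y D r = 0 \<or> avg_rel G1 y = 0 then None
      else Some ((ctr G1 y D r / ctr G0 y D r) * (avg_rel G0 y / avg_rel G1 y)))"

definition satisfies_boundedness :: "metric \<Rightarrow> bool" where
  "satisfies_boundedness m \<longleftrightarrow>
     (\<exists>vmin vmax :: real. \<forall>G0 G1 y D r. valid_setting G0 G1 y D r \<longrightarrow>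
        (\<exists>v. m G0 G1 y D r = Some v \<and> vmin \<le> v \<and> v \<le> vmax))"

end

theory Submission
  imports Defs
begin

lemma pos_bias_bounds: "0 \<le> pos_bias k \<and> pos_bias k \<le> 1"
proof (cases "k = 0")
  case True then show ?thesis by (simp add: pos_bias_def)
next
  case False
  then have "real k + 1 \<ge> 2" by simp
  then have "log 2 (real k + 1) \<ge> log 2 2"
    by (subst log_le_cancel_iff) auto
  then have "log 2 (real k + 1) \<ge> 1" by simp
  then show ?thesis by (simp add: pos_bias_def)
qed

lemma exposure_bounds:
  assumes "finite G"
  shows "0 \<le> exposure G D r \<and> exposure G D r \<le> 1"
proof -
  have s0: "0 \<le> (\<Sum>d\<in>G \<inter> D. pos_bias (position D r d))"
    by (rule sum_nonneg) (use pos_bias_bounds in blast)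
  have "(\<Sum>d\<in>G \<inter> D. pos_bias (position D r d)) \<le> (\<Sum>d\<in>G \<inter> D. 1)"
    by (rule sum_mono) (use pos_bias_bounds in blast)
  also have "\<dots> = real (card (G \<inter> D))" by simp
  also have "\<dots> \<le> real (card G)" using assms by (simp add: card_mono)
  finally have s1: "(\<Sum>d\<in>G \<inter> D. pos_bias (position D r d)) \<le> real (card G)" .
  show ?thesis
  proof (cases "card G = 0")
    case True then show ?thesis by (simp add: exposure_def)
  next
    case False
    then show ?thesis using s0 s1 by (simp add: exposure_def field_simps)
  qed
qed

lemma vs: "valid_setting {0} {1} (\<lambda>_. 0) {} id"
  by (simp add: valid_setting_def)

lemma none_unbounded:
  assumes "m {0} {1} (\<lambda>_. 0) {} id = None"
  shows "\<not> satisfies_boundedness m"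
  unfolding satisfies_boundedness_def using vs assms by force

theorem theorem3:
  shows "satisfies_boundedness ED \<and> \<not> satisfies_boundedness ER \<and>
         \<not> satisfies_boundedness DTD \<and> \<not> satisfies_boundedness DTR \<and>
         \<not> satisfies_boundedness DID \<and> \<not> satisfies_boundedness DIR"
proof (intro conjI)
  show "satisfies_boundedness ED"
    unfolding satisfies_boundedness_def
  proof (rule exI[of _ "-1"], rule exI[of _ 1], intro allI impI)
    fix G0 G1 y D r
    assume "valid_setting G0 G1 y D r"
    then have "finite G0" "finite G1" by (auto simp: valid_setting_def)
    then have "0 \<le> exposure G0 D r \<and> exposure G0 D r \<le> 1"
              "0 \<le> exposure G1 D r \<and> exposure G1 D r \<le> 1"
      using exposure_bounds by blast+
    then show "\<exists>v. ED G0 G1 y D r = Some v \<and> (-1::real) \<le> v \<and> v \<le> 1"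
      by (simp add: ED_def)
  qed
  show "\<not> satisfies_boundedness ER"
    by (rule none_unbounded) (simp add: ER_def exposure_def)
  show "\<not> satisfies_boundedness DTD"
    by (rule none_unbounded) (simp add: DTD_def avg_rel_def)
  show "\<not> satisfies_boundedness DTR"
    by (rule none_unbounded) (simp add: DTR_def exposure_def)
  show "\<not> satisfies_boundedness DID"
    by (rule none_unbounded) (simp add: DID_def avg_rel_def)
  show "\<not> satisfies_boundedness DIR"
    by (rule none_unbounded) (simp add: DIR_def avg_rel_def)
qed

end
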